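(* Let $\mathcal V\subseteq B(H)$ be an operator system and let $p\in\mathcal V$ be a projection in $B(H)$. Let $J_p=\operatorname{span}(C(p)\cap-C(p))$ and $J_{p_n}=\operatorname{span}(C(p_n)\cap-C(p_n))$. Then $M_n(J_p)=J_{p_n}$ for every $n\in\mathbb N$.
   Context: $p_n=I_n\otimes p$ and $C(p_n)=\{x\in M_n(\mathcal V): x=x^*,\ p_nxp_n\ge0\text{ in }B(H^n)\}$. *)

theory Defs
  imports "HOL-Analysis.Analysis" "HOL-Library.Function_Algebras"
begin

class complex_vector = real_vector +
  fixes scaleC :: "complex \<Rightarrow> 'a \<Rightarrow> 'a" (infixr "*\<^sub>C" 75)
  assumes scaleR_scaleC: "scaleR r = scaleC (complex_of_real r)"
  assumes scaleC_add_right: "a *\<^sub>C (x + y) = a *\<^sub>C x + a *\<^sub>C y"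
  assumes scaleC_add_left: "(a + b) *\<^sub>C x = a *\<^sub>C x + b *\<^sub>C x"
  assumes scaleC_scaleC: "a *\<^sub>C (b *\<^sub>C x) = (a * b) *\<^sub>C x"
  assumes scaleC_one: "1 *\<^sub>C x = x"

class complex_inner = complex_vector + real_inner +
  fixes cinner :: "'a \<Rightarrow> 'a \<Rightarrow> complex"
  assumes cinner_commute: "cinner x y = cnj (cinner y x)"
  assumes cinner_add_right: "cinner x (y + z) = cinner x y + cinner x z"
  assumes cinner_scaleC_right: "cinner x (r *\<^sub>C y) = r * cinner x y"
  assumes cinner_re: "inner x y = Re (cinner x y)"

class chilbert_space = complex_inner + complete_space

definition bounded_clinear :: "('a::complex_inner \<Rightarrow> 'b::complex_inner) \<Rightarrow> bool" where
  "bounded_clinear T \<longleftrightarrow> bounded_linear T \<and> (\<forall>c x. T (c *\<^sub>C x) = c *\<^sub>C T x)"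

definition BH :: "('h::chilbert_space \<Rightarrow> 'h) set" where
  "BH = {T. bounded_clinear T}"

definition is_adjoint :: "('h::complex_inner \<Rightarrow> 'h) \<Rightarrow> ('h \<Rightarrow> 'h) \<Rightarrow> bool" where
  "is_adjoint T S \<longleftrightarrow> (\<forall>x y. cinner (T x) y = cinner x (S y))"

definition selfadjoint :: "('h::complex_inner \<Rightarrow> 'h) \<Rightarrow> bool" where
  "selfadjoint T \<longleftrightarrow> is_adjoint T T"

definition positive_op :: "('h::complex_inner \<Rightarrow> 'h) \<Rightarrow> bool" where
  "positive_op T \<longleftrightarrow> (\<forall>h. Im (cinner h (T h)) = 0 \<and> Re (cinner h (T h)) \<ge> 0)"

definition projection :: "('h::chilbert_space \<Rightarrow> 'h) \<Rightarrow> bool" where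
  "projection p \<longleftrightarrow> p \<in> BH \<and> p \<circ> p = p \<and> selfadjoint p"

definition operator_system :: "('h::chilbert_space \<Rightarrow> 'h) set \<Rightarrow> bool" where
  "operator_system V \<longleftrightarrow> V \<subseteq> BH \<and> id \<in> V \<and> 0 \<in> V
     \<and> (\<forall>x\<in>V. \<forall>y\<in>V. x + y \<in> V)
     \<and> (\<forall>c. \<forall>x\<in>V. (\<lambda>h. c *\<^sub>C x h) \<in> V)
     \<and> (\<forall>x\<in>V. \<exists>y\<in>V. is_adjoint x y)"

definition gspan :: "(complex \<Rightarrow> 'v \<Rightarrow> 'v) \<Rightarrow> 'v::comm_monoid_add set \<Rightarrow> 'v set" where
  "gspan sc S = {y. \<exists>F c. finite F \<and> F \<subseteq> S \<and> y = (\<Sum>x\<in>F. sc (c x) x)}"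

definition op_scale :: "complex \<Rightarrow> ('h::complex_vector \<Rightarrow> 'h) \<Rightarrow> ('h \<Rightarrow> 'h)" where
  "op_scale c x = (\<lambda>h. c *\<^sub>C x h)"

definition mat_scale :: "complex \<Rightarrow> ('n \<Rightarrow> 'n \<Rightarrow> 'h::complex_vector \<Rightarrow> 'h) \<Rightarrow> ('n \<Rightarrow> 'n \<Rightarrow> 'h \<Rightarrow> 'h)" where
  "mat_scale c X = (\<lambda>i j h. c *\<^sub>C X i j h)"

definition Cp :: "('h::chilbert_space \<Rightarrow> 'h) set \<Rightarrow> ('h \<Rightarrow> 'h) \<Rightarrow> ('h \<Rightarrow> 'h) set" where
  "Cp V p = {x \<in> V. selfadjoint x \<and> positive_op (p \<circ> x \<circ> p)}"

definition Jp :: "('h::chilbert_space \<Rightarrow> 'h) set \<Rightarrow> ('h \<Rightarrow> 'h) \<Rightarrow> ('h \<Rightarrow> 'h) set" where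
  "Jp V p = gspan op_scale (Cp V p \<inter> uminus ` Cp V p)"

section \<open>Matrices over V, indexed by a finite type 'n (so n = CARD('n))\<close>

definition Mn :: "('h \<Rightarrow> 'h) set \<Rightarrow> ('n::finite \<Rightarrow> 'n \<Rightarrow> 'h \<Rightarrow> 'h) set" where
  "Mn S = {X. \<forall>i j. X i j \<in> S}"

definition mat_apply :: "('n::finite \<Rightarrow> 'n \<Rightarrow> 'h \<Rightarrow> 'h::complex_vector) \<Rightarrow> ('n \<Rightarrow> 'h) \<Rightarrow> ('n \<Rightarrow> 'h)" where
  "mat_apply X \<xi> = (\<lambda>i. \<Sum>j\<in>UNIV. X i j (\<xi> j))"

definition mat_mult :: "('n::finite \<Rightarrow> 'n \<Rightarrow> 'h \<Rightarrow> 'h::complex_vector) \<Rightarrow> ('n \<Rightarrow> 'n \<Rightarrow> 'h \<Rightarrow> 'h) \<Rightarrow> ('n \<Rightarrow> 'n \<Rightarrow> 'h \<Rightarrow> 'h)" where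
  "mat_mult A B = (\<lambda>i j. \<Sum>k\<in>UNIV. A i k \<circ> B k j)"

definition hn_inner :: "('n::finite \<Rightarrow> 'h::complex_inner) \<Rightarrow> ('n \<Rightarrow> 'h) \<Rightarrow> complex" where
  "hn_inner \<xi> \<eta> = (\<Sum>i\<in>UNIV. cinner (\<xi> i) (\<eta> i))"

definition positive_mat :: "('n::finite \<Rightarrow> 'n \<Rightarrow> 'h \<Rightarrow> 'h::complex_inner) \<Rightarrow> bool" where
  "positive_mat X \<longleftrightarrow> (\<forall>\<xi>. Im (hn_inner \<xi> (mat_apply X \<xi>)) = 0 \<and> Re (hn_inner \<xi> (mat_apply X \<xi>)) \<ge> 0)"

text \<open>Self-adjointness in M_n(B(H)) = B(H^n): (X*)_{ij} = (X_{ji})*.\<close>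
definition selfadjoint_mat :: "('n::finite \<Rightarrow> 'n \<Rightarrow> 'h \<Rightarrow> 'h::complex_inner) \<Rightarrow> bool" where
  "selfadjoint_mat X \<longleftrightarrow> (\<forall>i j. is_adjoint (X i j) (X j i))"

definition pn :: "('h \<Rightarrow> 'h::complex_vector) \<Rightarrow> ('n::finite \<Rightarrow> 'n \<Rightarrow> 'h \<Rightarrow> 'h)" where
  "pn p = (\<lambda>i j. if i = j then p else 0)"

definition Cpn :: "('h::chilbert_space \<Rightarrow> 'h) set \<Rightarrow> ('h \<Rightarrow> 'h) \<Rightarrow> ('n::finite \<Rightarrow> 'n \<Rightarrow> 'h \<Rightarrow> 'h) set" where
  "Cpn V p = {X \<in> Mn V. selfadjoint_mat X \<and> positive_mat (mat_mult (mat_mult (pn p) X) (pn p))}"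

definition Jpn :: "('h::chilbert_space \<Rightarrow> 'h) set \<Rightarrow> ('h \<Rightarrow> 'h) \<Rightarrow> ('n::finite \<Rightarrow> 'n \<Rightarrow> 'h \<Rightarrow> 'h) set" where
  "Jpn V p = gspan mat_scale (Cpn V p \<inter> uminus ` Cpn V p)"

end

theory Submission imports Defs begin

lemma scaleC_zero_right[simp]: "c *\<^sub>C (0::'a::complex_vector) = 0"
proof -
  have "c *\<^sub>C (0::'a) = c *\<^sub>C 0 + c *\<^sub>C 0" by (metis add_0 scaleC_add_right)
  then show ?thesis by simp
qed

lemma scaleC_zero_left[simp]: "0 *\<^sub>C (x::'a::complex_vector) = 0"
  by (metis scaleR_scaleC scaleR_zero_left of_real_0)

lemma scaleC_minus1: "(-1) *\<^sub>C (x::'a::complex_vector) = - x"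
  by (metis scaleR_scaleC scaleR_minus1_left of_real_1 of_real_minus)

lemma scaleC_minus_right: "c *\<^sub>C (- x::'a::complex_vector) = - (c *\<^sub>C x)"
  by (metis scaleC_minus1 scaleC_scaleC mult.commute)

lemma cinner_zero_right[simp]: "cinner x (0::'a::complex_inner) = 0"
proof -
  have "cinner x (0::'a) = cinner x 0 + cinner x 0" by (metis add_0 cinner_add_right)
  then show ?thesis by simp
qed

lemma cinner_zero_left[simp]: "cinner (0::'a::complex_inner) x = 0"
  by (metis cinner_commute cinner_zero_right complex_cnj_zero)

lemma cinner_add_left: "cinner (x + y) (z::'a::complex_inner) = cinner x z + cinner y z"
  by (metis cinner_commute cinner_add_right complex_cnj_add)

lemma cinner_scaleC_left: "cinner (c *\<^sub>C x) (y::'a::complex_inner) = cnj c * cinner x y"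
  by (metis cinner_commute cinner_scaleC_right complex_cnj_mult complex_cnj_cnj)

lemma cinner_minus_right: "cinner x (- y::'a::complex_inner) = - cinner x y"
  by (metis scaleC_minus1 cinner_scaleC_right mult_minus1)

lemma cinner_self_zero: "cinner x x = 0 \<Longrightarrow> (x::'a::complex_inner) = 0"
  by (metis cinner_re inner_eq_zero_iff zero_complex.simps(1))

lemma cinner_sum_right: "finite A \<Longrightarrow> cinner x (\<Sum>a\<in>A. f a) = (\<Sum>a\<in>A. cinner x (f a))"
  by (induction A rule: finite_induct) (auto simp: cinner_add_right)

lemma zero_if_cinner: "(\<And>h. cinner h (x::'a::complex_inner) = 0) \<Longrightarrow> x = 0"
  using cinner_self_zero by blast

lemma adj_sym: "is_adjoint T S \<Longrightarrow> is_adjoint S T"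
  unfolding is_adjoint_def by (metis cinner_commute)

lemma bcl_add: "bounded_clinear T \<Longrightarrow> T (x + y) = T x + T y"
  unfolding bounded_clinear_def by (simp add: linear_simps)
lemma bcl_zero: "bounded_clinear T \<Longrightarrow> T 0 = 0"
  unfolding bounded_clinear_def by (simp add: linear_simps)
lemma bcl_minus: "bounded_clinear T \<Longrightarrow> T (- x) = - T x"
  unfolding bounded_clinear_def by (simp add: linear_simps)
lemma bcl_scale: "bounded_clinear T \<Longrightarrow> T (c *\<^sub>C x) = c *\<^sub>C T x"
  unfolding bounded_clinear_def by simp

lemma polar:
  fixes B :: "'a \<Rightarrow> 'a \<Rightarrow> complex"
  assumes al: "\<And>x y z. B (add x y) z = B x z + B y z"
    and ar: "\<And>x y z. B z (add x y) = B z x + B z y"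
    and sl: "\<And>c x y. B (sc c x) y = cnj c * B x y"
    and sr: "\<And>c x y. B x (sc c y) = c * B x y"
    and d: "\<And>x. B x x = 0"
  shows "B x y = 0"
proof -
  have "B (add x y) (add x y) = B x x + B y x + (B x y + B y y)" by (simp add: al ar)
  then have 1: "B x y + B y x = 0" by (simp add: d add.commute)
  have "B (add x (sc \<i> y)) (add x (sc \<i> y)) = B x x + \<i> * B x y + cnj \<i> * B y x + B y y" by (simp add: al ar sl sr algebra_simps)
  then have 2: "\<i> * B x y - \<i> * B y x = 0" by (simp add: d algebra_simps)
  have "\<i> * (B x y - B y x) = 0" using 2 by (simp add: algebra_simps)
  then have "B x y = B y x" by simp
  with 1 show ?thesis by simp
qed


lemma cinner_minus_left: "cinner (- x) (y::'a::complex_inner) = - cinner x y"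
  by (metis scaleC_minus1 cinner_scaleC_left complex_cnj_minus complex_cnj_one mult_minus1)

lemma gspan_sub:
  assumes "S \<subseteq> T" "0 \<in> T" "\<And>x y. x \<in> T \<Longrightarrow> y \<in> T \<Longrightarrow> x + y \<in> T"
    "\<And>c x. x \<in> T \<Longrightarrow> sc c x \<in> T"
  shows "gspan sc S \<subseteq> T"
proof
  fix y assume "y \<in> gspan sc S"
  then obtain F c where F: "finite F" "F \<subseteq> S" "y = (\<Sum>x\<in>F. sc (c x) x)"
    unfolding gspan_def by blast
  have "F \<subseteq> S \<Longrightarrow> (\<Sum>x\<in>F. sc (c x) x) \<in> T" using F(1)
    by (induction F rule: finite_induct) (use assms in auto)
  with F show "y \<in> T" by simp
qed

lemma gspan_two:
  assumes dist: "\<And>c d u. sc (c + d) u = sc c u + sc d u"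
    and "u \<in> S" "v \<in> S"
  shows "sc c u + sc d v \<in> gspan sc S"
proof (cases "u = v")
  case True
  then have e: "sc c u + sc d v = (\<Sum>x\<in>{u}. sc ((\<lambda>_. c + d) x) x)" by (simp add: dist)
  show ?thesis unfolding gspan_def
    by (rule CollectI, rule exI[of _ "{u}"], rule exI[of _ "\<lambda>_. c + d"]) (use assms e in simp)
next
  case False
  then have e: "sc c u + sc d v = (\<Sum>x\<in>{u,v}. sc ((\<lambda>w. if w = u then c else d) x) x)" by simp
  show ?thesis unfolding gspan_def
    by (rule CollectI, rule exI[of _ "{u,v}"], rule exI[of _ "\<lambda>w. if w = u then c else d"]) (use assms e in simp)
qed

definition combo :: "complex \<Rightarrow> complex \<Rightarrow> ('h::complex_vector \<Rightarrow> 'h) \<Rightarrow> ('h \<Rightarrow> 'h) \<Rightarrow> 'h \<Rightarrow> 'h" where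
  "combo c d a b = (\<lambda>h. c *\<^sub>C a h + d *\<^sub>C b h)"

lemma combo_comm: "combo c d a b = combo d c b a"
  unfolding combo_def by (simp add: add.commute)

lemma adj_combo:
  assumes "is_adjoint a a'" "is_adjoint b b'"
  shows "is_adjoint (combo c d a b) (combo (cnj c) (cnj d) a' b')"
  using assms unfolding is_adjoint_def combo_def
  by (simp add: cinner_add_left cinner_add_right cinner_scaleC_left cinner_scaleC_right)

lemma os_props:
  assumes "operator_system V"
  shows "V \<subseteq> BH" "0 \<in> V" "\<And>x y. x \<in> V \<Longrightarrow> y \<in> V \<Longrightarrow> x + y \<in> V"
    "\<And>c x. x \<in> V \<Longrightarrow> op_scale c x \<in> V" "\<And>x. x \<in> V \<Longrightarrow> \<exists>y\<in>V. is_adjoint x y"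
  using assms unfolding operator_system_def op_scale_def by auto

lemma os_bcl: "operator_system V \<Longrightarrow> x \<in> V \<Longrightarrow> bounded_clinear x"
  using os_props(1) unfolding BH_def by blast

lemma os_combo: "operator_system V \<Longrightarrow> a \<in> V \<Longrightarrow> b \<in> V \<Longrightarrow> combo c d a b \<in> V"
proof -
  assume V: "operator_system V" "a \<in> V" "b \<in> V"
  have "combo c d a b = op_scale c a + op_scale d b"
    unfolding combo_def op_scale_def by (rule ext) simp
  then show ?thesis using os_props[OF V(1)] V by simp
qed

lemma os_minus: "operator_system V \<Longrightarrow> a \<in> V \<Longrightarrow> - a \<in> V"
proof -
  assume V: "operator_system V" "a \<in> V"
  have "- a = op_scale (-1) a" unfolding op_scale_def by (rule ext) (simp add: scaleC_minus1)
  then show ?thesis using os_props[OF V(1)] V by simp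
qed

lemma pxp_combo:
  assumes "bounded_clinear p" "p \<circ> a \<circ> p = 0" "p \<circ> b \<circ> p = 0"
  shows "p \<circ> combo c d a b \<circ> p = 0"
proof
  fix h
  have "p (a (p h)) = 0" "p (b (p h)) = 0" using assms(2,3) by (metis comp_apply zero_fun_apply)+
  then show "(p \<circ> combo c d a b \<circ> p) h = 0 h"
    unfolding combo_def using assms(1) by (simp add: bcl_add bcl_scale)
qed

lemma pxp_adj:
  assumes "selfadjoint p" "p \<circ> x \<circ> p = 0" "is_adjoint x y"
  shows "p \<circ> y \<circ> p = 0"
proof
  fix k
  have "cinner h (p (y (p k))) = 0" for h
  proof -
    have "cinner h (p (y (p k))) = cinner (p h) (y (p k))"
      using assms(1) unfolding selfadjoint_def is_adjoint_def by simp
    also have "\<dots> = cinner (x (p h)) (p k)" using assms(3) unfolding is_adjoint_def by simp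
    also have "\<dots> = cinner (p (x (p h))) k"
      using assms(1) unfolding selfadjoint_def is_adjoint_def by simp
    also have "p (x (p h)) = 0" using assms(2) by (metis comp_apply zero_fun_apply)
    finally show ?thesis by simp
  qed
  then show "(p \<circ> y \<circ> p) k = 0 k" by (simp add: zero_if_cinner)
qed

lemma scale_collect: "a *\<^sub>C u + b *\<^sub>C v + (c *\<^sub>C u + d *\<^sub>C v) = (a + c) *\<^sub>C u + (b + d) *\<^sub>C (v::'a::complex_vector)"
  by (simp add: scaleC_add_left algebra_simps)

lemma decomp: "1 *\<^sub>C ((1/2) *\<^sub>C x + (1/2) *\<^sub>C y) + \<i> *\<^sub>C ((-\<i>/2) *\<^sub>C x + (\<i>/2) *\<^sub>C y) = (x::'a::complex_vector)"
proof -
  have "1 *\<^sub>C ((1/2) *\<^sub>C x + (1/2) *\<^sub>C y) + \<i> *\<^sub>C ((-\<i>/2) *\<^sub>C x + (\<i>/2) *\<^sub>C y)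
     = (1/2) *\<^sub>C x + (1/2) *\<^sub>C y + ((1/2) *\<^sub>C x + (-1/2) *\<^sub>C y)"
    by (simp add: scaleC_add_right scaleC_scaleC scaleC_one)
  also have "\<dots> = (1/2 + 1/2) *\<^sub>C x + (1/2 + -1/2) *\<^sub>C y" by (rule scale_collect)
  finally show ?thesis by (simp add: scaleC_one)
qed


definition KK :: "('h::chilbert_space \<Rightarrow> 'h) set \<Rightarrow> ('h \<Rightarrow> 'h) \<Rightarrow> ('h \<Rightarrow> 'h) set" where
  "KK V p = {x \<in> V. p \<circ> x \<circ> p = 0}"

lemma proj_bcl: "projection p \<Longrightarrow> bounded_clinear p"
  unfolding projection_def BH_def by simp

lemma proj_sa: "projection p \<Longrightarrow> selfadjoint p"
  unfolding projection_def by simp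

lemma pxp_app: "p \<circ> x \<circ> p = 0 \<Longrightarrow> p (x (p h)) = 0"
  by (metis comp_apply zero_fun_apply)

lemma K_zero: "operator_system V \<Longrightarrow> projection p \<Longrightarrow> 0 \<in> KK V p"
  unfolding KK_def using os_props(2) proj_bcl bcl_zero by (fastforce simp: fun_eq_iff)

lemma K_add: "operator_system V \<Longrightarrow> projection p \<Longrightarrow> x \<in> KK V p \<Longrightarrow> y \<in> KK V p \<Longrightarrow> x + y \<in> KK V p"
  unfolding KK_def using os_props(3) proj_bcl bcl_add pxp_app by (fastforce simp: fun_eq_iff)

lemma K_scale: "operator_system V \<Longrightarrow> projection p \<Longrightarrow> x \<in> KK V p \<Longrightarrow> op_scale c x \<in> KK V p"
  unfolding KK_def op_scale_def using os_props(4)[unfolded op_scale_def] proj_bcl bcl_scale pxp_app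
  by (fastforce simp: fun_eq_iff)

lemma CC_sub_K:
  assumes V: "operator_system V" and P: "projection p"
  shows "Cp V p \<inter> uminus ` Cp V p \<subseteq> KK V p"
proof
  fix x assume "x \<in> Cp V p \<inter> uminus ` Cp V p"
  then obtain y where x: "x \<in> Cp V p" and y: "y \<in> Cp V p" and xy: "x = - y" by blast
  have xV: "x \<in> V" using x unfolding Cp_def by simp
  have xb: "bounded_clinear x" using os_bcl[OF V xV] .
  have pb: "bounded_clinear p" using proj_bcl[OF P] .
  have yx: "y = - x" using xy by simp
  have q0: "cinner h (p (x (p h))) = 0" for h
  proof -
    have a: "Im (cinner h (p (x (p h)))) = 0" "Re (cinner h (p (x (p h)))) \<ge> 0"
      using x unfolding Cp_def positive_op_def by auto
    have "Re (cinner h (p (y (p h)))) \<ge> 0" using y unfolding Cp_def positive_op_def by auto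
    then have "Re (cinner h (p (x (p h)))) \<le> 0" using yx by (simp add: bcl_minus[OF pb] cinner_minus_right)
    with a show ?thesis by (simp add: complex_eq_iff)
  qed
  have B0: "cinner h (p (x (p k))) = 0" for h k
    by (rule polar[where B="\<lambda>h k. cinner h (p (x (p k)))" and add="(+)" and sc="scaleC"])
      (simp_all add: q0 cinner_add_left cinner_add_right cinner_scaleC_left cinner_scaleC_right
         bcl_add[OF pb] bcl_add[OF xb] bcl_scale[OF pb] bcl_scale[OF xb])
  have "p \<circ> x \<circ> p = 0"
    by (rule ext) (simp add: zero_if_cinner B0)
  then show "x \<in> KK V p" using xV unfolding KK_def by simp
qed

lemma sa_in_CC:
  assumes V: "operator_system V" and P: "projection p" and "x \<in> V" "selfadjoint x" "p \<circ> x \<circ> p = 0"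
  shows "x \<in> Cp V p \<inter> uminus ` Cp V p"
proof -
  have pb: "bounded_clinear p" using proj_bcl[OF P] .
  have x: "x \<in> Cp V p" using assms unfolding Cp_def positive_op_def by (simp add: pxp_app[OF assms(5)])
  have "p \<circ> (- x) \<circ> p = 0" using assms(5) by (simp add: fun_eq_iff bcl_minus[OF pb] pxp_app)
  then have "\<forall>h. p ((- x) (p h)) = 0" using pxp_app by metis
  moreover have "selfadjoint (- x)" using assms(4)
    unfolding selfadjoint_def is_adjoint_def by (simp add: cinner_minus_left cinner_minus_right)
  ultimately have "- x \<in> Cp V p" using os_minus[OF V assms(3)] unfolding Cp_def positive_op_def
    by (simp del: uminus_apply)
  then have "x \<in> uminus ` Cp V p" by (metis image_eqI minus_minus)
  with x show ?thesis by simp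
qed

lemma K_sub_Jp:
  assumes V: "operator_system V" and P: "projection p" and xK: "x \<in> KK V p"
  shows "x \<in> Jp V p"
proof -
  have xV: "x \<in> V" and px: "p \<circ> x \<circ> p = 0" using xK unfolding KK_def by auto
  obtain y where yV: "y \<in> V" and xy: "is_adjoint x y" using os_props(5)[OF V xV] by blast
  have py: "p \<circ> y \<circ> p = 0" using pxp_adj[OF proj_sa[OF P] px xy] .
  define a where "a = combo (1/2) (1/2) x y"
  define b where "b = combo (-\<i>/2) (\<i>/2) x y"
  have aV: "a \<in> V" "b \<in> V" unfolding a_def b_def using os_combo[OF V xV yV] by auto
  have pa: "p \<circ> a \<circ> p = 0" "p \<circ> b \<circ> p = 0" unfolding a_def b_def
    using pxp_combo[OF proj_bcl[OF P] px py] by auto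
  have "selfadjoint a" unfolding selfadjoint_def a_def
    using adj_combo[OF xy adj_sym[OF xy], of "1/2" "1/2"] by (simp add: combo_comm)
  moreover have "selfadjoint b" unfolding selfadjoint_def b_def
    using adj_combo[OF xy adj_sym[OF xy], of "-\<i>/2" "\<i>/2"] by (simp add: combo_comm)
  ultimately have ab: "a \<in> Cp V p \<inter> uminus ` Cp V p" "b \<in> Cp V p \<inter> uminus ` Cp V p"
    using sa_in_CC[OF V P] aV pa by auto
  have "x = op_scale 1 a + op_scale \<i> b"
    unfolding a_def b_def op_scale_def combo_def by (rule ext) (simp only: plus_fun_apply decomp)
  also have "\<dots> \<in> Jp V p" unfolding Jp_def
    by (rule gspan_two[OF _ ab]) (simp add: op_scale_def fun_eq_iff scaleC_add_left)
  finally show ?thesis .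
qed

lemma Jp_eq_K:
  assumes V: "operator_system V" and P: "projection p"
  shows "Jp V p = KK V p"
proof
  show "Jp V p \<subseteq> KK V p" unfolding Jp_def
    by (rule gspan_sub[OF CC_sub_K[OF V P] K_zero[OF V P]])
       (auto intro: K_add[OF V P] K_scale[OF V P])
  show "KK V p \<subseteq> Jp V p" using K_sub_Jp[OF V P] by blast
qed


lemma PXP:
  assumes pb: "bounded_clinear p" and Xb: "\<And>i j. bounded_clinear (X i j)"
  shows "mat_mult (mat_mult (pn p) X) (pn p) = (\<lambda>i j. p \<circ> X i j \<circ> p)"
proof -
  have 1: "mat_mult (pn p) X = (\<lambda>i j. p \<circ> X i j)"
  proof (intro ext)
    fix i j h
    have "mat_mult (pn p) X i j = (\<Sum>k\<in>UNIV. if i = k then p \<circ> X k j else 0)"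
      unfolding mat_mult_def pn_def by (rule sum.cong) (auto simp: fun_eq_iff)
    also have "\<dots> = p \<circ> X i j" by simp
    finally show "mat_mult (pn p) X i j h = (p \<circ> X i j) h" by simp
  qed
  show ?thesis
  proof (intro ext)
    fix i j h
    have "mat_mult (\<lambda>i j. p \<circ> X i j) (pn p) i j = (\<Sum>k\<in>UNIV. if k = j then p \<circ> X i k \<circ> p else 0)"
      unfolding mat_mult_def pn_def
      by (rule sum.cong) (auto simp: fun_eq_iff bcl_zero[OF pb] bcl_zero[OF Xb])
    also have "\<dots> = p \<circ> X i j \<circ> p" by simp
    finally show "mat_mult (mat_mult (pn p) X) (pn p) i j h = (p \<circ> X i j \<circ> p) h"
      using 1 by simp
  qed
qed


lemma mat_CC_sub:
  assumes V: "operator_system V" and P: "projection p"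
  shows "Cpn V p \<inter> uminus ` Cpn V p \<subseteq> (Mn (KK V p) :: ('n::finite \<Rightarrow> 'n \<Rightarrow> 'h::chilbert_space \<Rightarrow> 'h) set)"
proof
  fix X :: "'n \<Rightarrow> 'n \<Rightarrow> 'h \<Rightarrow> 'h"
  assume "X \<in> Cpn V p \<inter> uminus ` Cpn V p"
  then obtain Y where X: "X \<in> Cpn V p" and Y: "Y \<in> Cpn V p" and xy: "X = - Y" by blast
  have XV: "X i j \<in> V" for i j using X unfolding Cpn_def Mn_def by simp
  have Xb: "bounded_clinear (X i j)" for i j using os_bcl[OF V XV] .
  have YV: "Y i j \<in> V" for i j using Y unfolding Cpn_def Mn_def by simp
  have Yb: "bounded_clinear (Y i j)" for i j using os_bcl[OF V YV] .
  have pb: "bounded_clinear p" using proj_bcl[OF P] .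
  have yx: "Y i j = - X i j" for i j using xy by simp
  define Q where "Q \<xi> \<eta> = (\<Sum>i\<in>UNIV. \<Sum>j\<in>UNIV. cinner (\<xi> i) (p (X i j (p (\<eta> j)))))"
    for \<xi> \<eta> :: "'n \<Rightarrow> 'h"
  have hX: "hn_inner \<xi> (mat_apply (mat_mult (mat_mult (pn p) X) (pn p)) \<xi>) = Q \<xi> \<xi>" for \<xi>
    unfolding PXP[OF pb Xb] Q_def hn_inner_def mat_apply_def by (simp add: cinner_sum_right)
  have hY: "hn_inner \<xi> (mat_apply (mat_mult (mat_mult (pn p) Y) (pn p)) \<xi>) = - Q \<xi> \<xi>" for \<xi>
    unfolding PXP[OF pb Yb] Q_def hn_inner_def mat_apply_def
    by (simp add: cinner_sum_right yx bcl_minus[OF pb] cinner_minus_right sum_negf)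
  have q0: "Q \<xi> \<xi> = 0" for \<xi>
  proof -
    have pX: "positive_mat (mat_mult (mat_mult (pn p) X) (pn p))" using X unfolding Cpn_def by simp
    have pY: "positive_mat (mat_mult (mat_mult (pn p) Y) (pn p))" using Y unfolding Cpn_def by simp
    have a: "Im (Q \<xi> \<xi>) = 0" "Re (Q \<xi> \<xi>) \<ge> 0"
      using pX unfolding positive_mat_def hX by auto
    have "Re (- Q \<xi> \<xi>) \<ge> 0" using pY unfolding positive_mat_def hY by blast
    with a show ?thesis by (simp add: complex_eq_iff)
  qed
  have B0: "Q \<xi> \<eta> = 0" for \<xi> \<eta>
    by (rule polar[where B="Q" and add="(+)" and sc="\<lambda>c \<xi> l. c *\<^sub>C \<xi> l"])
      (simp_all add: q0 Q_def cinner_add_left cinner_add_right cinner_scaleC_left cinner_scaleC_right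
         bcl_add[OF pb] bcl_add[OF Xb] bcl_scale[OF pb] bcl_scale[OF Xb] sum.distrib sum_distrib_left)
  have "p \<circ> X i j \<circ> p = 0" for i j
  proof (rule ext)
    fix k
    have "cinner h (p (X i j (p k))) = 0" for h
    proof -
      have "\<And>l m. cinner (if l = i then h else 0) (p (X l m (p (if m = j then k else 0))))
          = (if l = i then (if m = j then cinner h (p (X i j (p k))) else 0) else 0)"
        by (auto simp: bcl_zero[OF pb] bcl_zero[OF Xb])
      moreover have "(\<Sum>m\<in>UNIV. if l = i then if m = j then c else 0 else 0) = (if l = i then c else 0)"
        for l and c :: complex by (cases "l = i") simp_all
      ultimately have "Q (\<lambda>l. if l = i then h else 0) (\<lambda>m. if m = j then k else 0) = cinner h (p (X i j (p k)))"
        unfolding Q_def by simp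
      with B0 show ?thesis by simp
    qed
    then show "(p \<circ> X i j \<circ> p) k = 0 k" by (simp add: zero_if_cinner)
  qed
  then show "X \<in> Mn (KK V p)" unfolding Mn_def KK_def using XV by simp
qed

lemma matsa_in_CC:
  assumes V: "operator_system V" and P: "projection p" and ZV: "\<And>i j. Z i j \<in> V"
    and sa: "selfadjoint_mat Z" and pz: "\<And>i j. p \<circ> Z i j \<circ> p = 0"
  shows "(Z :: 'n::finite \<Rightarrow> 'n \<Rightarrow> 'h::chilbert_space \<Rightarrow> 'h) \<in> Cpn V p \<inter> uminus ` Cpn V p"
proof -
  have pb: "bounded_clinear p" using proj_bcl[OF P] .
  have Zb: "bounded_clinear (Z i j)" for i j using os_bcl[OF V ZV] .
  have mZb: "bounded_clinear ((- Z) i j)" for i j using os_bcl[OF V os_minus[OF V ZV]] by simp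
  have z: "(\<lambda>i j. p \<circ> Z i j \<circ> p) = (\<lambda>i j. 0)" using pz by simp
  have mz: "(\<lambda>i j. p \<circ> (- Z) i j \<circ> p) = (\<lambda>i j. 0)"
    using pz by (simp add: fun_eq_iff bcl_minus[OF pb] pxp_app)
  have pos0: "positive_mat (\<lambda>i j. 0 :: 'h \<Rightarrow> 'h)" for dummy :: 'n
    unfolding positive_mat_def hn_inner_def mat_apply_def by simp
  have "positive_mat (mat_mult (mat_mult (pn p) Z) (pn p))"
    unfolding PXP[OF pb Zb] z by (rule pos0)
  then have c1: "Z \<in> Cpn V p" unfolding Cpn_def Mn_def
    using ZV sa by simp
  have "selfadjoint_mat (- Z)" using sa
    unfolding selfadjoint_mat_def is_adjoint_def by (simp add: cinner_minus_left cinner_minus_right)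
  moreover have "positive_mat (mat_mult (mat_mult (pn p) (- Z)) (pn p))"
    unfolding PXP[OF pb mZb] mz by (rule pos0)
  ultimately have "- Z \<in> Cpn V p" unfolding Cpn_def Mn_def
    using os_minus[OF V ZV] by simp
  then have "Z \<in> uminus ` Cpn V p" by (metis image_eqI minus_minus)
  with c1 show ?thesis by simp
qed


lemma Mn_K_sub:
  assumes V: "operator_system V" and P: "projection p"
  shows "(Mn (KK V p) :: ('n::finite \<Rightarrow> 'n \<Rightarrow> 'h::chilbert_space \<Rightarrow> 'h) set) \<subseteq> Jpn V p"
proof
  fix X :: "'n \<Rightarrow> 'n \<Rightarrow> 'h \<Rightarrow> 'h"
  assume "X \<in> Mn (KK V p)"
  then have XV: "X i j \<in> V" and px: "p \<circ> X i j \<circ> p = 0" for i j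
    unfolding Mn_def KK_def by auto
  define Y where "Y i j = (SOME y. y \<in> V \<and> is_adjoint (X i j) y)" for i j
  have Y: "Y i j \<in> V \<and> is_adjoint (X i j) (Y i j)" for i j
  proof -
    obtain y where "y \<in> V \<and> is_adjoint (X i j) y" using os_props(5)[OF V XV, of i j] by blast
    then show ?thesis unfolding Y_def by (rule someI[where P="\<lambda>y. y \<in> V \<and> is_adjoint (X i j) y"])
  qed
  have YV: "Y i j \<in> V" and xy: "is_adjoint (X i j) (Y i j)" for i j using Y by auto
  have py: "p \<circ> Y i j \<circ> p = 0" for i j using pxp_adj[OF proj_sa[OF P] px xy] .
  define R where "R i j = combo (1/2) (1/2) (X i j) (Y j i)" for i j
  define I where "I i j = combo (-\<i>/2) (\<i>/2) (X i j) (Y j i)" for i j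
  have RV: "R i j \<in> V" "I i j \<in> V" for i j unfolding R_def I_def using os_combo[OF V XV YV] by auto
  have pr: "p \<circ> R i j \<circ> p = 0" "p \<circ> I i j \<circ> p = 0" for i j unfolding R_def I_def
    using pxp_combo[OF proj_bcl[OF P] px py] by auto
  have sR: "selfadjoint_mat R" unfolding selfadjoint_mat_def
  proof (intro allI)
    fix i j
    show "is_adjoint (R i j) (R j i)" unfolding R_def
      using adj_combo[OF xy[of i j] adj_sym[OF xy[of j i]], of "1/2" "1/2"] by (simp add: combo_comm)
  qed
  have sI: "selfadjoint_mat I" unfolding selfadjoint_mat_def
  proof (intro allI)
    fix i j
    show "is_adjoint (I i j) (I j i)" unfolding I_def
      using adj_combo[OF xy[of i j] adj_sym[OF xy[of j i]], of "-\<i>/2" "\<i>/2"] by (simp add: combo_comm)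
  qed
  have ab: "R \<in> Cpn V p \<inter> uminus ` Cpn V p" "I \<in> Cpn V p \<inter> uminus ` Cpn V p"
    by (rule matsa_in_CC[OF V P RV(1) sR pr(1)], rule matsa_in_CC[OF V P RV(2) sI pr(2)])
  have "X = mat_scale 1 R + mat_scale \<i> I"
    unfolding R_def I_def mat_scale_def combo_def by (intro ext) (simp only: plus_fun_apply decomp)
  also have "\<dots> \<in> Jpn V p" unfolding Jpn_def
    by (rule gspan_two[OF _ ab]) (simp add: mat_scale_def fun_eq_iff scaleC_add_left)
  finally show "X \<in> Jpn V p" .
qed

theorem lemma3p4:
  fixes V :: "('h::chilbert_space \<Rightarrow> 'h) set" and p :: "'h \<Rightarrow> 'h"
  assumes "operator_system V" and "p \<in> V" and "projection p"
  shows "(Mn (Jp V p) :: ('n::finite \<Rightarrow> 'n \<Rightarrow> 'h \<Rightarrow> 'h) set) = Jpn V p"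
proof -
  note V = assms(1) and P = assms(3)
  have "(Mn (Jp V p) :: ('n \<Rightarrow> 'n \<Rightarrow> 'h \<Rightarrow> 'h) set) = Mn (KK V p)" by (simp add: Jp_eq_K[OF V P])
  moreover have "Jpn V p \<subseteq> (Mn (KK V p) :: ('n \<Rightarrow> 'n \<Rightarrow> 'h \<Rightarrow> 'h) set)"
    unfolding Jpn_def
  proof (rule gspan_sub[OF mat_CC_sub[OF V P]])
    show "0 \<in> (Mn (KK V p) :: ('n \<Rightarrow> 'n \<Rightarrow> 'h \<Rightarrow> 'h) set)"
      unfolding Mn_def using K_zero[OF V P] by simp
    show "x + y \<in> Mn (KK V p)" if "x \<in> Mn (KK V p)" "y \<in> Mn (KK V p)" for x y :: "'n \<Rightarrow> 'n \<Rightarrow> 'h \<Rightarrow> 'h"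
      using that K_add[OF V P] unfolding Mn_def by simp
    show "mat_scale c x \<in> Mn (KK V p)" if "x \<in> Mn (KK V p)" for c and x :: "'n \<Rightarrow> 'n \<Rightarrow> 'h \<Rightarrow> 'h"
    proof -
      have "mat_scale c x i j = op_scale c (x i j)" for i j unfolding mat_scale_def op_scale_def by simp
      then show ?thesis using that K_scale[OF V P] unfolding Mn_def by simp
    qed
  qed
  ultimately show ?thesis using Mn_K_sub[OF V P] by auto
qed

end
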